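(* Fix $1\le i\le h$ and let $\hat F_i\subseteq B_i$ be such that $\hat G_i=(V(T_i),\hat F_i)$ is a forest of stars. Let $L_i$ be the set of vertices of $T_i$ that are leaves of some star of $\hat G_i$, where for a star with a single edge one of its two endpoints (arbitrarily chosen) is regarded as its leaf. Then $r(\hat F_i)\ge\sum_{v\in L_i}c_i(v_0,v)$.
   Context: $\mathsf{StackMST}(\gamma,\Delta)$: given a tree $T=(V,E(T))$ with red edge costs $c(e)\ge0$, activation costs $\gamma(e)\ge0$ for every pair $e\notin E(T)$, and a budget $\Delta$; the leader activates and prices new edges, the follower takes a minimum spanning tree breaking ties in favor of the leader, whose revenue is the total price of selected new edges. For a red (multi)graph tree with costs $c'$ and a set $F$ of added edges, define for $e\in F$: $p_F(e)=\min_H\max_{e'\in E(H)\text{ red}}c'(e')$ over all simple cycles $H$ containing $e$ in the multigraph of red edges plus $F$; $r(F)$ is the leader's revenue when activating $F$ priced by $p_F$. Root $T$ at its center $v_0$; $h$ is its height. For $1\le i\le h$, $V_i=\{v_1,\dots,v_{\ell_i}\}$ are the vertices at depth $i$, $E_i$ the edges joining them to their parents; $T_i$ is the red star centered at $v_0$ with leaves $v_1,\dots,v_{\ell_i}$ and costs $c_i(v_0,v)=c(u,v)$, $u$ the parent of $v$ in $T$; by convention $c_i(v_0,v_0)=0$. Let $\hat T_0,\dots,\hat T_{\ell_i}$ be the components of $T-E_i$, $v_0\in\hat T_0$, $v_j\in\hat T_j$; for $j\ne q$, $B_i$ contains the edge $(v_j,v_q)$ whenever some pair not in $E(T)$ joins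 $\hat T_j$ and $\hat T_q$ (edges $(v_0,v_q)$ are parallel to red edges). $r(\hat F_i)$ is computed in the auxiliary instance with red star $T_i$ and costs $c_i$. *)

theory Defs
  imports Complex_Main
begin

definition adj :: "'a set set \<Rightarrow> ('a \<times> 'a) set" where
  "adj E = {(u, v). {u, v} \<in> E}"

definition is_tree :: "'a set \<Rightarrow> 'a set set \<Rightarrow> bool" where
  "is_tree V E \<longleftrightarrow> finite V \<and> V \<noteq> {} \<and>
     E \<subseteq> {{u, v} | u v. u \<in> V \<and> v \<in> V \<and> u \<noteq> v} \<and>
     (\<forall>u\<in>V. \<forall>v\<in>V. (u, v) \<in> (adj E)\<^sup>*) \<and>
     card E = card V - 1"

definition tdist :: "'a set set \<Rightarrow> 'a \<Rightarrow> 'a \<Rightarrow> nat" where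
  "tdist E u v = (LEAST n. (u, v) \<in> (adj E) ^^ n)"

definition ecc :: "'a set \<Rightarrow> 'a set set \<Rightarrow> 'a \<Rightarrow> nat" where
  "ecc V E v = Max (tdist E v ` V)"

definition is_center :: "'a set \<Rightarrow> 'a set set \<Rightarrow> 'a \<Rightarrow> bool" where
  "is_center V E v0 \<longleftrightarrow> v0 \<in> V \<and> (\<forall>v\<in>V. ecc V E v0 \<le> ecc V E v)"

definition level :: "'a set \<Rightarrow> 'a set set \<Rightarrow> 'a \<Rightarrow> nat \<Rightarrow> 'a set" where
  "level V E v0 i = {v \<in> V. tdist E v0 v = i}"

definition level_edges :: "'a set \<Rightarrow> 'a set set \<Rightarrow> 'a \<Rightarrow> nat \<Rightarrow> 'a set set" where
  "level_edges V E v0 i =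
     {e \<in> E. \<exists>u v. e = {u, v} \<and> tdist E v0 u + 1 = i \<and> tdist E v0 v = i}"

text \<open>c_i(v0,v) = c(u,v), u the parent of v; c_i(v0,v0) = 0.\<close>
definition aux_cost :: "'a set \<Rightarrow> 'a set set \<Rightarrow> ('a set \<Rightarrow> real) \<Rightarrow> 'a \<Rightarrow> nat \<Rightarrow> 'a \<Rightarrow> real" where
  "aux_cost V E c v0 i v =
     (if v = v0 then 0 else c (THE e. e \<in> level_edges V E v0 i \<and> v \<in> e))"

definition comp :: "'a set \<Rightarrow> 'a set set \<Rightarrow> 'a \<Rightarrow> 'a set" where
  "comp V E' x = {y \<in> V. (x, y) \<in> (adj E')\<^sup>*}"

definition Bset :: "'a set \<Rightarrow> 'a set set \<Rightarrow> 'a \<Rightarrow> nat \<Rightarrow> 'a set set" where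
  "Bset V E v0 i =
     {{x, y} | x y. x \<in> insert v0 (level V E v0 i) \<and> y \<in> insert v0 (level V E v0 i) \<and> x \<noteq> y \<and>
        (\<exists>a \<in> comp V (E - level_edges V E v0 i) x. \<exists>b \<in> comp V (E - level_edges V E v0 i) y.
            a \<noteq> b \<and> {a, b} \<notin> E)}"

text \<open>Every connected component of (W, F) is a star: it has a vertex c lying on every
  edge of F that meets the component.\<close>
definition forest_of_stars :: "'a set \<Rightarrow> 'a set set \<Rightarrow> bool" where
  "forest_of_stars W F \<longleftrightarrow>
     F \<subseteq> {{u, v} | u v. u \<in> W \<and> v \<in> W \<and> u \<noteq> v} \<and>
     (\<forall>v\<in>W. \<exists>c. (v, c) \<in> (adj F)\<^sup>* \<and>
        (\<forall>e\<in>F. (\<exists>x\<in>e. (v, x) \<in> (adj F)\<^sup>*) \<longrightarrow> c \<in> e))"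

text \<open>L is an admissible leaf set: there is a choice C of star centres (each edge has exactly
  one endpoint in C, every non-centre has degree at most one); L are the non-centres of
  positive degree. For a single-edge star either endpoint may be chosen as centre/leaf.\<close>
definition leaf_choice :: "'a set \<Rightarrow> 'a set set \<Rightarrow> 'a set \<Rightarrow> bool" where
  "leaf_choice W F L \<longleftrightarrow>
     (\<exists>C \<subseteq> W. (\<forall>e\<in>F. card (e \<inter> C) = 1) \<and>
        (\<forall>v \<in> W - C. card {e \<in> F. v \<in> e} \<le> 1) \<and>
        L = {v \<in> W - C. \<exists>e\<in>F. v \<in> e})"

text \<open>Edge labels: Inl v is the red edge (v0,v); Inr e is the added (leader) edge e.
  Parallel edges are thus kept distinct.\<close>
definition aux_edges :: "'a set \<Rightarrow> 'a set set \<Rightarrow> ('a + 'a set) set" where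
  "aux_edges Lv F = Inl ` Lv \<union> Inr ` F"

definition aux_ends :: "'a \<Rightarrow> ('a + 'a set) \<Rightarrow> 'a set" where
  "aux_ends v0 x = (case x of Inl v \<Rightarrow> {v0, v} | Inr e \<Rightarrow> e)"

definition mg_adj :: "'e set \<Rightarrow> ('e \<Rightarrow> 'a set) \<Rightarrow> ('a \<times> 'a) set" where
  "mg_adj S ends = {(u, v). \<exists>x\<in>S. ends x = {u, v} \<and> u \<noteq> v}"

definition is_cycle :: "'e set \<Rightarrow> ('e \<Rightarrow> 'a set) \<Rightarrow> 'e list \<Rightarrow> 'a list \<Rightarrow> bool" where
  "is_cycle Es ends es ws \<longleftrightarrow>
     length es = length ws \<and> 2 \<le> length es \<and> distinct es \<and> distinct ws \<and> set es \<subseteq> Es \<and>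
     (\<forall>j < length es. ends (es ! j) = {ws ! j, ws ! ((j + 1) mod length es)})"

text \<open>Maximum red cost on a cycle (costs are nonnegative, so inserting 0 is harmless).\<close>
definition cycle_red_max :: "('a \<Rightarrow> real) \<Rightarrow> ('a + 'a set) list \<Rightarrow> real" where
  "cycle_red_max ci es = Max (insert 0 {ci v | v. Inl v \<in> set es})"

definition price :: "'a \<Rightarrow> 'a set \<Rightarrow> ('a \<Rightarrow> real) \<Rightarrow> 'a set set \<Rightarrow> 'a set \<Rightarrow> real" where
  "price v0 Lv ci F e =
     Min {cycle_red_max ci es | es ws. is_cycle (aux_edges Lv F) (aux_ends v0) es ws \<and> Inr e \<in> set es}"

definition aux_weight :: "'a \<Rightarrow> 'a set \<Rightarrow> ('a \<Rightarrow> real) \<Rightarrow> 'a set set \<Rightarrow> ('a + 'a set) \<Rightarrow> real" where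
  "aux_weight v0 Lv ci F x = (case x of Inl v \<Rightarrow> ci v | Inr e \<Rightarrow> price v0 Lv ci F e)"

definition mg_spanning_tree :: "'a set \<Rightarrow> 'e set \<Rightarrow> ('e \<Rightarrow> 'a set) \<Rightarrow> 'e set \<Rightarrow> bool" where
  "mg_spanning_tree W Es ends S \<longleftrightarrow>
     S \<subseteq> Es \<and> (\<forall>u\<in>W. \<forall>v\<in>W. (u, v) \<in> (mg_adj S ends)\<^sup>*) \<and> card S = card W - 1"

definition is_mst :: "'a set \<Rightarrow> 'e set \<Rightarrow> ('e \<Rightarrow> 'a set) \<Rightarrow> ('e \<Rightarrow> real) \<Rightarrow> 'e set \<Rightarrow> bool" where
  "is_mst W Es ends w S \<longleftrightarrow> mg_spanning_tree W Es ends S \<and>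
     (\<forall>S'. mg_spanning_tree W Es ends S' \<longrightarrow> sum w S \<le> sum w S')"

text \<open>r(F): the follower picks an MST, ties broken in favour of the leader, i.e. an MST
  maximising the leader's revenue (total price of selected added edges).\<close>
definition revenue :: "'a \<Rightarrow> 'a set \<Rightarrow> ('a \<Rightarrow> real) \<Rightarrow> 'a set set \<Rightarrow> real" where
  "revenue v0 Lv ci F =
     Max {(\<Sum>e \<in> {e \<in> F. Inr e \<in> S}. price v0 Lv ci F e) | S.
            is_mst (insert v0 Lv) (aux_edges Lv F) (aux_ends v0) (aux_weight v0 Lv ci F) S}"

end

theory Submission
  imports Defs
begin


lemma rtrancl_ins_edge:
  assumes "(x,y) \<in> (A \<union> {(a,b),(b,a)})\<^sup>*"
  shows "(x,y) \<in> A\<^sup>* \<or> (((x,a)\<in>A\<^sup>* \<or> (x,b)\<in>A\<^sup>*) \<and> ((a,y)\<in>A\<^sup>* \<or> (b,y)\<in>A\<^sup>*))"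
  using assms
proof (induction rule: rtrancl_induct)
  case base then show ?case by simp
next
  case (step y z)
  from step.hyps(2) have "(y,z) \<in> A \<or> (y = a \<and> z = b) \<or> (y = b \<and> z = a)" by auto
  then show ?case
  proof (elim disjE)
    assume yz: "(y,z) \<in> A"
    from step.IH show ?thesis
      by (meson rtrancl.rtrancl_into_rtrancl yz)
  next
    assume "y = a \<and> z = b"
    with step.IH show ?thesis by auto
  next
    assume "y = b \<and> z = a"
    with step.IH show ?thesis by auto
  qed
qed

lemma adj_insert:
  "adj (insert e E') = adj E' \<union> {(u,v). {u,v} = e}"
  unfolding adj_def by auto

lemma pair_set_eq: "{(u,v). {u,v} = {a,b}} = {(a,b),(b,a)}"
  by (auto simp: doubleton_eq_iff)

lemma conn_count:
  assumes "finite E'"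
  shows "finite W \<Longrightarrow> finite R \<Longrightarrow> \<forall>w\<in>W. \<exists>r\<in>R. (w,r) \<in> (adj E')\<^sup>* \<Longrightarrow> card W \<le> card R + card E'"
  using assms
proof (induction E' arbitrary: R rule: finite_induct)
  case empty
  have "adj {} = {}" by (simp add: adj_def)
  then have "W \<subseteq> R" using empty.prems(3) by (metis empty_iff rtrancl_empty rtrancl_idemp subsetI pair_in_Id_conv)
  with empty show ?case by (simp add: card_mono)
next
  case (insert e E' R)
  show ?case
  proof (cases "\<exists>a b. e = {a,b}")
    case False
    then have "{(u,v). {u,v} = e} = {}" by auto
    then have "adj (insert e E') = adj E'" by (simp add: adj_insert)
    with insert.prems have "card W \<le> card R + card E'" using insert.IH by auto
    with insert.hyps show ?thesis by simp
  next
    case True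
    then obtain a b where e: "e = {a,b}" by blast
    let ?A = "adj E'"
    have adjI: "adj (insert e E') = ?A \<union> {(a,b),(b,a)}"
      by (simp add: adj_insert e pair_set_eq)
    have path: "\<And>w r. (w,r) \<in> (adj (insert e E'))\<^sup>* \<Longrightarrow>
       (w,r) \<in> ?A\<^sup>* \<or> (((w,a)\<in>?A\<^sup>* \<or> (w,b)\<in>?A\<^sup>*) \<and> ((a,r)\<in>?A\<^sup>* \<or> (b,r)\<in>?A\<^sup>*))"
      using rtrancl_ins_edge adjI by metis
    have fin: "finite E'" using insert.hyps by simp
    show ?thesis
    proof (cases "\<exists>r\<in>R. (a,r) \<in> ?A\<^sup>*")
      case True
      then obtain ra where ra: "ra \<in> R" "(a,ra) \<in> ?A\<^sup>*" by blast
      have "\<forall>w\<in>W. \<exists>r\<in>insert b R. (w,r) \<in> ?A\<^sup>*"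
      proof
        fix w assume "w \<in> W"
        with insert.prems obtain r where r: "r \<in> R" "(w,r) \<in> (adj (insert e E'))\<^sup>*" by blast
        from path[OF r(2)] show "\<exists>r\<in>insert b R. (w,r) \<in> ?A\<^sup>*"
          using r(1) ra by (meson insertCI rtrancl_trans)
      qed
      with insert.IH[of "insert b R"] insert.prems have "card W \<le> card (insert b R) + card E'" by auto
      moreover have "card (insert b R) \<le> card R + 1" using insert.prems by (simp add: card_insert_if)
      ultimately show ?thesis using insert.hyps by simp
    next
      case F1: False
      show ?thesis
      proof (cases "\<exists>r\<in>R. (b,r) \<in> ?A\<^sup>*")
        case True
        then obtain rb where rb: "rb \<in> R" "(b,rb) \<in> ?A\<^sup>*" by blast
        have "\<forall>w\<in>W. \<exists>r\<in>insert a R. (w,r) \<in> ?A\<^sup>*"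
        proof
          fix w assume "w \<in> W"
          with insert.prems obtain r where r: "r \<in> R" "(w,r) \<in> (adj (insert e E'))\<^sup>*" by blast
          from path[OF r(2)] show "\<exists>r\<in>insert a R. (w,r) \<in> ?A\<^sup>*"
            using r(1) rb by (meson insertCI rtrancl_trans)
        qed
        with insert.IH[of "insert a R"] insert.prems have "card W \<le> card (insert a R) + card E'" by auto
        moreover have "card (insert a R) \<le> card R + 1" using insert.prems by (simp add: card_insert_if)
        ultimately show ?thesis using insert.hyps by simp
      next
        case False
        have "\<forall>w\<in>W. \<exists>r\<in>R. (w,r) \<in> ?A\<^sup>*"
        proof
          fix w assume "w \<in> W"
          with insert.prems obtain r where r: "r \<in> R" "(w,r) \<in> (adj (insert e E'))\<^sup>*" by blast
          from path[OF r(2)] show "\<exists>r\<in>R. (w,r) \<in> ?A\<^sup>*"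
            using r(1) F1 False by blast
        qed
        with insert.IH[of R] insert.prems have "card W \<le> card R + card E'" by auto
        then show ?thesis using insert.hyps by simp
      qed
    qed
  qed
qed

lemma conn_card:
  assumes "finite E'" "finite W" "w0 \<in> W" "\<forall>u\<in>W. \<forall>v\<in>W. (u,v) \<in> (adj E')\<^sup>*"
  shows "card W \<le> 1 + card E'"
  using conn_count[OF assms(1) assms(2), of "{w0}"] assms(3,4) by auto



lemma adj_edge:
  assumes "is_tree V E" "(x,y) \<in> adj E"
  shows "{x,y} \<in> E" "x \<in> V" "y \<in> V" "x \<noteq> y"
proof -
  show e: "{x,y} \<in> E" using assms(2) by (simp add: adj_def)
  have "E \<subseteq> {{u, v} | u v. u \<in> V \<and> v \<in> V \<and> u \<noteq> v}" using assms(1) by (simp add: is_tree_def)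
  with e obtain u v where "{x,y} = {u,v}" "u \<in> V" "v \<in> V" "u \<noteq> v" by blast
  then show "x \<in> V" "y \<in> V" "x \<noteq> y" by (auto simp: doubleton_eq_iff)
qed

lemma adj_sym: "(x,y) \<in> adj E \<Longrightarrow> (y,x) \<in> adj E"
  by (simp add: adj_def insert_commute)

lemma sym_adj: "sym (adj E)"
  by (meson adj_sym symI)

lemma rtrancl_sym_adj: "(x,y) \<in> (adj E)\<^sup>* \<Longrightarrow> (y,x) \<in> (adj E)\<^sup>*"
  by (meson sym_adj sym_rtrancl symD)

lemma tdist_path:
  assumes "is_tree V E" "v0 \<in> V" "x \<in> V"
  shows "(v0,x) \<in> (adj E) ^^ (tdist E v0 x)"
proof -
  have "(v0,x) \<in> (adj E)\<^sup>*" using assms by (simp add: is_tree_def)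
  then obtain n where "(v0,x) \<in> (adj E) ^^ n" using rtrancl_power by blast
  then show ?thesis unfolding tdist_def by (rule LeastI)
qed

lemma tdist_le: "(v0,x) \<in> (adj E) ^^ n \<Longrightarrow> tdist E v0 x \<le> n"
  unfolding tdist_def by (rule Least_le)

lemma tdist_step:
  assumes "is_tree V E" "v0 \<in> V" "(y,x) \<in> adj E"
  shows "tdist E v0 x \<le> tdist E v0 y + 1"
proof -
  have "y \<in> V" using adj_edge[OF assms(1,3)] by simp
  then have "(v0,y) \<in> (adj E) ^^ (tdist E v0 y)" using tdist_path[OF assms(1,2)] by blast
  then have "(v0,x) \<in> (adj E) ^^ (Suc (tdist E v0 y))" using assms(3) by auto
  then show ?thesis using tdist_le by fastforce
qed

lemma tdist_pred:
  assumes "is_tree V E" "v0 \<in> V" "x \<in> V" "tdist E v0 x = Suc n"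
  shows "\<exists>y. (y,x) \<in> adj E \<and> tdist E v0 y = n"
proof -
  have "(v0,x) \<in> (adj E) ^^ (Suc n)" using tdist_path[OF assms(1-3)] assms(4) by simp
  then obtain y where y: "(v0,y) \<in> (adj E) ^^ n" "(y,x) \<in> adj E" by auto
  have "tdist E v0 y \<le> n" using tdist_le[OF y(1)] .
  moreover have "Suc n \<le> tdist E v0 y + 1" using tdist_step[OF assms(1,2) y(2)] assms(4) by simp
  ultimately show ?thesis using y(2) by auto
qed

lemma tdist_v0: "tdist E v0 v0 = 0"
  unfolding tdist_def by (rule Least_eq_0) simp

lemma tdist_zero:
  assumes "is_tree V E" "v0 \<in> V" "x \<in> V" "tdist E v0 x = 0"
  shows "x = v0"
  using tdist_path[OF assms(1-3)] assms(4) by simp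

lemma low_conn:
  assumes T: "is_tree V E" and v0: "v0 \<in> V"
    and bad: "tdist E v0 b = i" "tdist E v0 a + 1 = i"
  shows "n < i \<Longrightarrow> x \<in> V \<Longrightarrow> tdist E v0 x = n \<Longrightarrow> (v0,x) \<in> (adj (E - {{a,b}}))\<^sup>*"
proof (induction n arbitrary: x)
  case 0
  then have "x = v0" using tdist_zero[OF T v0] by simp
  then show ?case by simp
next
  case (Suc n)
  obtain y where y: "(y,x) \<in> adj E" "tdist E v0 y = n"
    using tdist_pred[OF T v0 Suc.prems(2,3)] by blast
  have yV: "y \<in> V" using adj_edge[OF T y(1)] by simp
  have IH: "(v0,y) \<in> (adj (E - {{a,b}}))\<^sup>*" using Suc.IH[OF _ yV y(2)] Suc.prems(1) by simp
  have "{y,x} \<noteq> {a,b}"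
  proof
    assume eq: "{y,x} = {a,b}"
    have "x \<noteq> b" using Suc.prems bad by auto
    then have "x = a" "y = b" using eq by (auto simp: doubleton_eq_iff)
    then show False using y(2) Suc.prems bad by auto
  qed
  then have "(y,x) \<in> adj (E - {{a,b}})" using adj_edge(1)[OF T y(1)] by (simp add: adj_def)
  with IH show ?case by simp
qed

lemma unique_parent:
  assumes T: "is_tree V E" and v0: "v0 \<in> V"
    and u: "{u,v} \<in> E" "tdist E v0 u + 1 = i" and u': "{u',v} \<in> E" "tdist E v0 u' + 1 = i"
    and v: "tdist E v0 v = i"
  shows "u = u'"
proof (rule ccontr)
  assume ne: "u \<noteq> u'"
  let ?E' = "E - {{u',v}}"
  have uV: "u \<in> V" "v \<in> V" using adj_edge[OF T, of u v] u(1) by (auto simp: adj_def)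
  have u'V: "u' \<in> V" using adj_edge[OF T, of u' v] u'(1) by (auto simp: adj_def)
  have c1: "(v0,u) \<in> (adj ?E')\<^sup>*" using low_conn[OF T v0 v u'(2), of "tdist E v0 u" u] u uV by simp
  have c2: "(v0,u') \<in> (adj ?E')\<^sup>*" using low_conn[OF T v0 v u'(2), of "tdist E v0 u'" u'] u' u'V by simp
  have "{u,v} \<noteq> {u',v}" using ne by (auto simp: doubleton_eq_iff)
  then have "(u,v) \<in> adj ?E'" using u(1) by (simp add: adj_def)
  with c1 have c3: "(v0,v) \<in> (adj ?E')\<^sup>*" by simp
  have step: "(x,y) \<in> (adj ?E')\<^sup>*" if "(x,y) \<in> adj E" for x y
  proof (cases "{x,y} = {u',v}")
    case True
    have "(u',v) \<in> (adj ?E')\<^sup>*" using c2 c3 rtrancl_sym_adj by (meson rtrancl_trans)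
    moreover have "(v,u') \<in> (adj ?E')\<^sup>*" using c2 c3 rtrancl_sym_adj by (meson rtrancl_trans)
    ultimately show ?thesis using True by (auto simp: doubleton_eq_iff)
  next
    case False
    then have "(x,y) \<in> adj ?E'" using that by (simp add: adj_def)
    then show ?thesis by blast
  qed
  have sub: "(adj E)\<^sup>* \<subseteq> (adj ?E')\<^sup>*"
  proof
    fix p assume "p \<in> (adj E)\<^sup>*"
    then obtain x y where p: "p = (x,y)" "(x,y) \<in> (adj E)\<^sup>*" by (cases p) auto
    from p(2) have "(x,y) \<in> (adj ?E')\<^sup>*"
      by (induction rule: rtrancl_induct) (auto intro: rtrancl_trans step)
    then show "p \<in> (adj ?E')\<^sup>*" using p by simp
  qed
  have finV: "finite V" using T by (simp add: is_tree_def)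
  have "E \<subseteq> {{u, v} | u v. u \<in> V \<and> v \<in> V \<and> u \<noteq> v}" using T by (simp add: is_tree_def)
  then have "E \<subseteq> Pow V" by blast
  then have finE: "finite E" using finV finite_subset[of E "Pow V"] by simp
  have conn: "\<forall>x\<in>V. \<forall>y\<in>V. (x,y) \<in> (adj ?E')\<^sup>*" using T sub by (auto simp: is_tree_def)
  have "card V \<le> 1 + card ?E'" using conn_card[OF _ finV v0 conn] finE by simp
  moreover have "card ?E' = card E - 1" using u'(1) finE by simp
  moreover have "card E = card V - 1" using T by (simp add: is_tree_def)
  moreover have "card V \<ge> 2"
  proof -
    have "v \<noteq> u" using adj_edge[OF T, of u v] u(1) by (auto simp: adj_def)
    then have "card {u,v} = 2" by simp
    moreover have "{u,v} \<subseteq> V" using uV by simp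
    ultimately show ?thesis using finV by (metis card_mono)
  qed
  ultimately show False by linarith
qed

lemma aux_cost_nonneg:
  assumes T: "is_tree V E" and v0: "v0 \<in> V" and cn: "\<forall>e\<in>E. 0 \<le> c e"
    and i: "1 \<le> i" and v: "v \<in> level V E v0 i"
  shows "0 \<le> aux_cost V E c v0 i v"
proof -
  have vV: "v \<in> V" and vd: "tdist E v0 v = i" using v by (auto simp: level_def)
  have vne: "v \<noteq> v0" using vd i tdist_v0[of E v0] by auto
  obtain k where k: "i = Suc k" using i by (cases i) auto
  obtain u where u: "(u,v) \<in> adj E" "tdist E v0 u = k" using tdist_pred[OF T v0 vV] vd k by blast
  let ?P = "\<lambda>e. e \<in> level_edges V E v0 i \<and> v \<in> e"
  have ue: "{u,v} \<in> E" using adj_edge(1)[OF T u(1)] .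
  have P1: "?P {u,v}" unfolding level_edges_def using ue u(2) vd k by auto
  have Puniq: "e = {u,v}" if "?P e" for e
  proof -
    from that obtain x y where e: "e \<in> E" "e = {x,y}" "tdist E v0 x + 1 = i" "tdist E v0 y = i" "v \<in> e"
      unfolding level_edges_def by blast
    have "v \<noteq> x" using e(3) vd by auto
    then have "v = y" using e by auto
    then have "x = u" using unique_parent[OF T v0 _ _ _ _ vd, of x u] e ue u(2) k by simp
    then show ?thesis using e \<open>v = y\<close> by simp
  qed
  have "(THE e. ?P e) = {u,v}" using P1 Puniq by (rule the_equality)
  then show ?thesis unfolding aux_cost_def using vne cn ue by simp
qed



locale core =
  fixes v0 :: 'a and Lv :: "'a set" and a :: "'a \<Rightarrow> real" and F :: "'a set set" and C :: "'a set"
  assumes finLv: "finite Lv" and v0Lv: "v0 \<notin> Lv" and anneg: "\<forall>v\<in>Lv. 0 \<le> a v"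
    and Fsub: "F \<subseteq> {{u,v}|u v. u \<in> insert v0 Lv \<and> v \<in> insert v0 Lv \<and> u \<noteq> v}"
    and CW: "C \<subseteq> insert v0 Lv" and Ccard: "\<forall>e\<in>F. card (e \<inter> C) = 1"
    and deg: "\<forall>v \<in> insert v0 Lv - C. card {e\<in>F. v\<in>e} \<le> 1"
begin

abbreviation "W \<equiv> insert v0 Lv"
abbreviation "Es \<equiv> aux_edges Lv F"
abbreviation "ends \<equiv> aux_ends v0"
abbreviation "p \<equiv> price v0 Lv a F"
abbreviation "wt \<equiv> aux_weight v0 Lv a F"

lemma finW: "finite W" using finLv by simp

lemma finF: "finite F"
proof -
  have "F \<subseteq> Pow W" using Fsub by blast
  then show ?thesis using finW finite_subset[of F "Pow W"] by simp
qed

lemma finEs: "finite Es"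
  unfolding aux_edges_def using finLv finF by simp

lemma F_edge:
  assumes "e \<in> F"
  obtains x y where "e = {x,y}" "x \<in> W" "y \<in> W" "x \<noteq> y" "x \<in> C" "y \<notin> C"
proof -
  obtain x y where xy: "e = {x,y}" "x \<in> W" "y \<in> W" "x \<noteq> y" using assms Fsub by blast
  have c1: "card (e \<inter> C) = 1" using assms Ccard by blast
  show ?thesis
  proof (cases "x \<in> C")
    case True
    then have "y \<notin> C" using c1 xy by (auto simp: card_insert_if)
    then show ?thesis using that xy True by blast
  next
    case False
    then have "y \<in> C" using c1 xy by (cases "y \<in> C") auto
    then show ?thesis using that[of y x] xy False by (auto simp: insert_commute)
  qed
qed

lemma F_C_unique: "e \<in> F \<Longrightarrow> x \<in> e \<Longrightarrow> y \<in> e \<Longrightarrow> x \<in> C \<Longrightarrow> y \<in> C \<Longrightarrow> x = y"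
  by (erule F_edge) auto

lemma F_sub_W: "e \<in> F \<Longrightarrow> x \<in> e \<Longrightarrow> x \<in> W"
  by (erule F_edge) auto

lemma deg1:
  assumes "u \<in> W" "u \<notin> C" "e \<in> F" "e' \<in> F" "u \<in> e" "u \<in> e'"
  shows "e = e'"
proof -
  have "card {e\<in>F. u\<in>e} \<le> 1" using deg assms(1,2) by blast
  moreover have "finite {e\<in>F. u\<in>e}" using finF by simp
  moreover have "e \<in> {e\<in>F. u\<in>e}" "e' \<in> {e\<in>F. u\<in>e}" using assms by auto
  ultimately show ?thesis using card_le_Suc0_iff_eq[of "{e\<in>F. u\<in>e}"] by (simp only: One_nat_def)
qed

lemma F_other:
  assumes "e \<in> F" "x \<in> e" "x \<in> C"
  obtains u where "e = {x,u}" "u \<notin> C" "u \<noteq> x" "u \<in> W"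
proof -
  obtain x' y where xy: "e = {x',y}" "x' \<in> C" "y \<notin> C" "x' \<noteq> y" "y \<in> W"
    using assms(1) by (elim F_edge) blast
  have "x = x'" using xy assms(2,3) by blast
  then show ?thesis using that[of y] xy by blast
qed

definition K :: "'a \<Rightarrow> 'a set" where "K c = {u. {c,u} \<in> F}"

lemma K_props: "c \<in> C \<Longrightarrow> u \<in> K c \<Longrightarrow> u \<notin> C \<and> u \<noteq> c \<and> u \<in> W"
proof -
  assume c: "c \<in> C" and u: "u \<in> K c"
  then have e: "{c,u} \<in> F" by (simp add: K_def)
  obtain u' where u': "{c,u} = {c,u'}" "u' \<notin> C" "u' \<noteq> c" "u' \<in> W"
    using F_other[OF e _ c] by blast
  have "u = u'" using u' by (metis doubleton_eq_iff)
  then show ?thesis using u' by simp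
qed

lemma finK: "c \<in> C \<Longrightarrow> finite (K c)"
proof -
  assume "c \<in> C"
  then have "K c \<subseteq> W" using K_props by blast
  then show ?thesis using finW finite_subset by blast
qed

definition lmin :: "'a \<Rightarrow> 'a" where
  "lmin c = (SOME u. u \<in> K c \<and> (\<forall>x\<in>K c. a u \<le> a x))"

lemma lmin:
  assumes "c \<in> C" "K c \<noteq> {}"
  shows "lmin c \<in> K c" "\<forall>x\<in>K c. a (lmin c) \<le> a x"
proof -
  have fin: "finite (a ` K c)" using finK assms by simp
  have "Min (a ` K c) \<in> a ` K c" using fin assms by simp
  then obtain u where u: "u \<in> K c" "a u = Min (a ` K c)" by auto
  have "\<forall>x\<in>K c. a u \<le> a x" using u fin by simp
  then have "\<exists>u. u \<in> K c \<and> (\<forall>x\<in>K c. a u \<le> a x)" using u by blast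
  then have "lmin c \<in> K c \<and> (\<forall>x\<in>K c. a (lmin c) \<le> a x)"
    unfolding lmin_def by (rule someI_ex)
  then show "lmin c \<in> K c" "\<forall>x\<in>K c. a (lmin c) \<le> a x" by auto
qed

definition flip :: "'a \<Rightarrow> bool" where
  "flip c \<longleftrightarrow> c \<noteq> v0 \<and> K c \<noteq> {} \<and> v0 \<notin> K c \<and> a (lmin c) < a c"

definition inF :: "'a \<Rightarrow> bool" where "inF x \<longleftrightarrow> (\<exists>e\<in>F. x \<in> e)"

definition eu :: "'a \<Rightarrow> 'a set" where "eu x = (THE e. e \<in> F \<and> x \<in> e)"

definition cen :: "'a \<Rightarrow> 'a" where "cen x = (THE y. y \<in> eu x \<and> y \<in> C)"

lemma leaf_facts:
  assumes "x \<in> W" "x \<notin> C" "inF x"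
  shows "eu x \<in> F" "x \<in> eu x" "\<And>e. e \<in> F \<Longrightarrow> x \<in> e \<Longrightarrow> e = eu x"
    "cen x \<in> C" "eu x = {cen x, x}" "x \<in> K (cen x)" "cen x \<noteq> x"
proof -
  obtain e where e: "e \<in> F" "x \<in> e" using assms(3) inF_def by blast
  have uniq: "\<And>e'. e' \<in> F \<Longrightarrow> x \<in> e' \<Longrightarrow> e' = e" using deg1[OF assms(1,2) _ e(1) _ e(2)] by blast
  have eue: "eu x = e" unfolding eu_def using e uniq by (intro the_equality) blast+
  show "eu x \<in> F" "x \<in> eu x" using e eue by auto
  show "\<And>e'. e' \<in> F \<Longrightarrow> x \<in> e' \<Longrightarrow> e' = eu x" using uniq eue by auto
  obtain y z where yz: "e = {y,z}" "y \<in> C" "z \<notin> C" "y \<noteq> z" using e(1) by (elim F_edge) auto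
  have zx: "z = x" using yz e(2) assms(2) by auto
  have "cen x = y" unfolding cen_def eue using yz by (auto intro!: the_equality)
  then show "cen x \<in> C" "eu x = {cen x, x}" "x \<in> K (cen x)" "cen x \<noteq> x"
    using yz zx eue e(1) by (auto simp: K_def)
qed

definition psi :: "'a \<Rightarrow> 'a + 'a set" where
  "psi x = (if \<not> inF x then Inl x
    else if x \<notin> C then (if flip (cen x) \<and> x = lmin (cen x) then Inl x else Inr (eu x))
    else if {v0,x} \<in> F then Inr {v0,x}
    else if flip x then Inr {x, lmin x} else Inl x)"

lemma ends_simps[simp]: "aux_ends v0 (Inl v) = {v0,v}" "aux_ends v0 (Inr e) = e"
  by (simp_all add: aux_ends_def)

lemma Es_mem[simp]: "Inl v \<in> Es \<longleftrightarrow> v \<in> Lv" "Inr e \<in> Es \<longleftrightarrow> e \<in> F"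
  by (auto simp: aux_edges_def)

lemma crm_fin: "finite {a v |v. Inl v \<in> set es}"
proof -
  have "{a v |v. Inl v \<in> set es} = a ` (Inl -` set es)" by auto
  moreover have "finite (Inl -` set es)" by (rule finite_vimageI) (auto simp: inj_on_def)
  ultimately show ?thesis by simp
qed

lemma crm_ge0: "0 \<le> cycle_red_max a es"
  unfolding cycle_red_max_def by (rule Max_ge) (simp_all add: crm_fin)

lemma crm_ge: "Inl v \<in> set es \<Longrightarrow> a v \<le> cycle_red_max a es"
  unfolding cycle_red_max_def by (rule Max_ge) (auto simp: crm_fin)

lemma crm_le: "0 \<le> B \<Longrightarrow> (\<forall>v. Inl v \<in> set es \<longrightarrow> a v \<le> B) \<Longrightarrow> cycle_red_max a es \<le> B"
  unfolding cycle_red_max_def using crm_fin[of es] by (auto simp: Max_le_iff)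

definition PS :: "'a set \<Rightarrow> real set" where
  "PS e = {cycle_red_max a es | es ws. is_cycle Es ends es ws \<and> Inr e \<in> set es}"

lemma p_def: "p e = Min (PS e)"
  unfolding price_def PS_def by simp

lemma PS_fin: "finite (PS e)"
proof -
  have "PS e \<subseteq> cycle_red_max a ` {es. set es \<subseteq> Es \<and> distinct es}"
    unfolding PS_def is_cycle_def by blast
  moreover have "finite {es. set es \<subseteq> Es \<and> distinct es}"
    using finite_subset_distinct[OF finEs] .
  ultimately show ?thesis using finite_subset by blast
qed

lemma is_cycleI2: "e0 \<noteq> e1 \<Longrightarrow> w0 \<noteq> w1 \<Longrightarrow> e0 \<in> Es \<Longrightarrow> e1 \<in> Es \<Longrightarrow>
   ends e0 = {w0,w1} \<Longrightarrow> ends e1 = {w1,w0} \<Longrightarrow> is_cycle Es ends [e0,e1] [w0,w1]"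
  unfolding is_cycle_def
proof (intro conjI allI impI)
  fix j :: nat assume "j < length [e0,e1]"
  then have "j = 0 \<or> j = 1" by auto
  moreover assume "ends e0 = {w0,w1}" "ends e1 = {w1,w0}"
  ultimately show "ends ([e0,e1] ! j) = {[w0,w1] ! j, [w0,w1] ! ((j + 1) mod length [e0,e1])}" by auto
qed auto

lemma is_cycleI3: "distinct [e0,e1,e2] \<Longrightarrow> distinct [w0,w1,w2] \<Longrightarrow> e0 \<in> Es \<Longrightarrow> e1 \<in> Es \<Longrightarrow> e2 \<in> Es \<Longrightarrow>
   ends e0 = {w0,w1} \<Longrightarrow> ends e1 = {w1,w2} \<Longrightarrow> ends e2 = {w2,w0} \<Longrightarrow> is_cycle Es ends [e0,e1,e2] [w0,w1,w2]"
  unfolding is_cycle_def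
proof (intro conjI allI impI)
  fix j :: nat assume "j < length [e0,e1,e2]"
  then have "j = 0 \<or> j = 1 \<or> j = 2" by auto
  moreover assume "ends e0 = {w0,w1}" "ends e1 = {w1,w2}" "ends e2 = {w2,w0}"
  ultimately show "ends ([e0,e1,e2] ! j) = {[w0,w1,w2] ! j, [w0,w1,w2] ! ((j + 1) mod length [e0,e1,e2])}" by auto
qed auto

lemma is_cycleI4: "distinct [e0,e1,e2,e3] \<Longrightarrow> distinct [w0,w1,w2,w3] \<Longrightarrow> e0 \<in> Es \<Longrightarrow> e1 \<in> Es \<Longrightarrow> e2 \<in> Es \<Longrightarrow> e3 \<in> Es \<Longrightarrow>
   ends e0 = {w0,w1} \<Longrightarrow> ends e1 = {w1,w2} \<Longrightarrow> ends e2 = {w2,w3} \<Longrightarrow> ends e3 = {w3,w0} \<Longrightarrow>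
   is_cycle Es ends [e0,e1,e2,e3] [w0,w1,w2,w3]"
  unfolding is_cycle_def
proof (intro conjI allI impI)
  fix j :: nat assume "j < length [e0,e1,e2,e3]"
  then have "j = 0 \<or> j = 1 \<or> j = 2 \<or> j = 3" by auto
  moreover assume "ends e0 = {w0,w1}" "ends e1 = {w1,w2}" "ends e2 = {w2,w3}" "ends e3 = {w3,w0}"
  ultimately show "ends ([e0,e1,e2,e3] ! j) = {[w0,w1,w2,w3] ! j, [w0,w1,w2,w3] ! ((j + 1) mod length [e0,e1,e2,e3])}" by auto
qed auto

lemma cyc2: "x \<in> Lv \<Longrightarrow> {v0,x} \<in> F \<Longrightarrow> is_cycle Es ends [Inl x, Inr {v0,x}] [v0,x]"
  apply (rule is_cycleI2)
  using v0Lv by (auto simp: insert_commute)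

lemma cyc3: "x \<in> Lv \<Longrightarrow> y \<in> Lv \<Longrightarrow> x \<noteq> y \<Longrightarrow> {x,y} \<in> F \<Longrightarrow>
   is_cycle Es ends [Inl x, Inr {x,y}, Inl y] [v0,x,y]"
  apply (rule is_cycleI3)
  using v0Lv by (auto simp: insert_commute)

lemma cyc3b: "c \<in> Lv \<Longrightarrow> u \<in> Lv \<Longrightarrow> c \<noteq> u \<Longrightarrow> {v0,c} \<in> F \<Longrightarrow> {c,u} \<in> F \<Longrightarrow>
   is_cycle Es ends [Inr {v0,c}, Inr {c,u}, Inl u] [v0,c,u]"
  apply (rule is_cycleI3)
  using v0Lv by (auto simp: insert_commute doubleton_eq_iff)

lemma cyc4: "x \<in> Lv \<Longrightarrow> c \<in> Lv \<Longrightarrow> u \<in> Lv \<Longrightarrow> x \<noteq> c \<Longrightarrow> c \<noteq> u \<Longrightarrow> x \<noteq> u \<Longrightarrow>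
   {x,c} \<in> F \<Longrightarrow> {c,u} \<in> F \<Longrightarrow>
   is_cycle Es ends [Inl x, Inr {x,c}, Inr {c,u}, Inl u] [v0,x,c,u]"
  apply (rule is_cycleI4)
  using v0Lv by (auto simp: insert_commute doubleton_eq_iff)

lemma PS_ne: assumes "e \<in> F" shows "PS e \<noteq> {}"
proof -
  obtain x y where xy: "e = {x,y}" "x \<in> W" "y \<in> W" "x \<noteq> y" using assms by (elim F_edge) blast
  have "\<exists>es ws. is_cycle Es ends es ws \<and> Inr e \<in> set es"
  proof (cases "x = v0")
    case True
    then have "y \<in> Lv" using xy by auto
    then show ?thesis using cyc2[of y] xy True assms by (intro exI) auto
  next
    case False
    note xL = False
    show ?thesis
    proof (cases "y = v0")
      case True
      then have "x \<in> Lv" using xy xL by auto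
      moreover have "{v0,x} \<in> F" using assms xy True by (simp add: insert_commute)
      ultimately show ?thesis using cyc2[of x] xy True by (intro exI) (auto simp: insert_commute)
    next
      case False
      then have "x \<in> Lv" "y \<in> Lv" using xy xL by auto
      then show ?thesis using cyc3[of x y] xy assms by (intro exI) auto
    qed
  qed
  then show ?thesis unfolding PS_def by blast
qed

lemma price_le:
  assumes "is_cycle Es ends es ws" "Inr e \<in> set es" "0 \<le> B" "\<forall>v. Inl v \<in> set es \<longrightarrow> a v \<le> B"
  shows "p e \<le> B"
proof -
  have "cycle_red_max a es \<in> PS e" unfolding PS_def using assms(1,2) by blast
  then have "p e \<le> cycle_red_max a es" unfolding p_def using PS_fin by simp
  also have "\<dots> \<le> B" using crm_le assms(3,4) by blast
  finally show ?thesis .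
qed

lemma price_ge0: "e \<in> F \<Longrightarrow> 0 \<le> p e"
  unfolding p_def using PS_fin PS_ne by (auto simp: PS_def crm_ge0)

lemma mod_succ_ne: "(j::nat) < n \<Longrightarrow> 2 \<le> n \<Longrightarrow> (j+1) mod n \<noteq> j"
proof (cases "j+1 < n")
  case True
  then have "(j+1) mod n = j+1" by (rule mod_less)
  then show ?thesis by simp
next
  case False
  assume "j < n" "2 \<le> n"
  with False have "j + 1 = n" by simp
  then show ?thesis using \<open>2 \<le> n\<close> by auto
qed

lemma cycle_other:
  assumes "is_cycle Es ends es ws" "j < length es" "u \<in> ends (es!j)"
  shows "\<exists>j'<length es. j' \<noteq> j \<and> u \<in> ends (es!j')"
proof -
  let ?n = "length es"
  have n: "2 \<le> ?n" "length ws = ?n" using assms(1) by (auto simp: is_cycle_def)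
  have E: "\<And>k. k < ?n \<Longrightarrow> ends (es ! k) = {ws ! k, ws ! ((k + 1) mod ?n)}"
    using assms(1) by (auto simp: is_cycle_def)
  have "u = ws ! j \<or> u = ws ! ((j+1) mod ?n)" using E[OF assms(2)] assms(3) by auto
  then show ?thesis
  proof
    assume u: "u = ws ! j"
    define j' where "j' = (j + ?n - 1) mod ?n"
    have j'l: "j' < ?n" unfolding j'_def using n by (intro mod_less_divisor) auto
    have "(j' + 1) mod ?n = j"
    proof -
      have "(j' + 1) mod ?n = ((j + ?n - 1) + 1) mod ?n" unfolding j'_def by (simp add: mod_Suc_eq)
      also have "(j + ?n - 1) + 1 = j + ?n" using n by simp
      finally show ?thesis using assms(2) by simp
    qed
    then have "u \<in> ends (es ! j')" using E[OF j'l] u by simp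
    moreover have "j' \<noteq> j"
    proof
      assume "j' = j"
      then have "(j + 1) mod ?n = j" using \<open>(j' + 1) mod ?n = j\<close> by simp
      then show False using n assms(2)
        using mod_succ_ne by blast
    qed
    ultimately show ?thesis using j'l by blast
  next
    assume u: "u = ws ! ((j+1) mod ?n)"
    define j' where "j' = (j + 1) mod ?n"
    have j'l: "j' < ?n" unfolding j'_def using n by (intro mod_less_divisor) auto
    have "u \<in> ends (es ! j')" using E[OF j'l] u unfolding j'_def by simp
    moreover have "j' \<noteq> j"
    proof
      assume "j' = j"
      then have "(j + 1) mod ?n = j" unfolding j'_def by simp
      then show False using n assms(2)
        using mod_succ_ne by blast
    qed
    ultimately show ?thesis using j'l by blast
  qed
qed

lemma price_ge_leaf:
  assumes e: "e \<in> F" and u: "u \<in> e" "u \<in> Lv" "u \<notin> C"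
  shows "a u \<le> p e"
proof -
  have "\<forall>z\<in>PS e. a u \<le> z"
  proof
    fix z assume "z \<in> PS e"
    then obtain es ws where c: "is_cycle Es ends es ws" "Inr e \<in> set es" "z = cycle_red_max a es"
      unfolding PS_def by blast
    obtain j where j: "j < length es" "es ! j = Inr e" using c(2) by (metis in_set_conv_nth)
    obtain j' where j': "j' < length es" "j' \<noteq> j" "u \<in> ends (es ! j')"
      using cycle_other[OF c(1) j(1)] j(2) u(1) by auto
    have "distinct es" using c(1) by (simp add: is_cycle_def)
    then have dis: "es ! j' \<noteq> es ! j" using nth_eq_iff_index_eq[OF _ j'(1) j(1)] j'(2) by auto
    have inE: "es ! j' \<in> Es" using c(1) j' by (auto simp: is_cycle_def)
    have "es ! j' = Inl u"
    proof (cases "es ! j'")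
      case (Inl v)
      then show ?thesis using j'(3) u(2) v0Lv by auto
    next
      case (Inr e')
      then have "e' \<in> F" "u \<in> e'" using inE j'(3) by auto
      then have "e' = e" using deg1[of u e' e] u e by auto
      then show ?thesis using Inr dis j(2) by simp
    qed
    then have "Inl u \<in> set es" using j'(1) by (metis nth_mem)
    then show "a u \<le> z" using c(3) crm_ge by simp
  qed
  then show ?thesis unfolding p_def using PS_fin PS_ne[OF e] by simp
qed

lemma Lv_ne_v0: "x \<in> Lv \<Longrightarrow> x \<noteq> v0" using v0Lv by auto

lemma K_iff: "u \<in> K c \<longleftrightarrow> {c,u} \<in> F" by (simp add: K_def)

lemma cen_K_ne: "c \<in> C \<Longrightarrow> inF c \<Longrightarrow> K c \<noteq> {}"
proof -
  assume c: "c \<in> C" "inF c"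
  then obtain e where e: "e \<in> F" "c \<in> e" by (auto simp: inF_def)
  obtain u where "e = {c,u}" using F_other[OF e c(1)] by blast
  then have "u \<in> K c" using e by (simp add: K_def)
  then show ?thesis by blast
qed

lemma flip_D:
  assumes "flip c" "c \<in> C"
  shows "lmin c \<in> K c" "a (lmin c) < a c" "v0 \<notin> K c" "c \<noteq> v0" "{c, lmin c} \<in> F"
    "lmin c \<in> Lv" "lmin c \<notin> C" "lmin c \<noteq> c" "\<forall>x\<in>K c. a (lmin c) \<le> a x"
proof -
  have f: "c \<noteq> v0" "K c \<noteq> {}" "v0 \<notin> K c" "a (lmin c) < a c" using assms(1) by (auto simp: flip_def)
  have l: "lmin c \<in> K c" "\<forall>x\<in>K c. a (lmin c) \<le> a x" using lmin[OF assms(2) f(2)] by auto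
  show "lmin c \<in> K c" "a (lmin c) < a c" "v0 \<notin> K c" "c \<noteq> v0" "\<forall>x\<in>K c. a (lmin c) \<le> a x"
    using f l by auto
  show "{c, lmin c} \<in> F" using l by (simp add: K_def)
  have "lmin c \<notin> C \<and> lmin c \<noteq> c \<and> lmin c \<in> W" using K_props[OF assms(2) l(1)] .
  then show "lmin c \<in> Lv" "lmin c \<notin> C" "lmin c \<noteq> c" using l(1) f(3) by auto
qed

lemma leaf_cen:
  assumes "x \<in> W" "x \<notin> C" "{c,x} \<in> F" "c \<in> C"
  shows "cen x = c" "inF x" "eu x = {c,x}"
proof -
  show i: "inF x" using assms(3) by (auto simp: inF_def)
  note lf = leaf_facts[OF assms(1,2) i]
  have "{c,x} = eu x" using lf(3)[OF assms(3)] by simp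
  then have "c \<in> eu x" by auto
  moreover have "cen x \<in> eu x" using lf(5) by simp
  ultimately show "cen x = c" using F_C_unique[OF lf(1) _ _ assms(4) lf(4)] by simp
  then show "eu x = {c,x}" using lf(5) by simp
qed

lemma psi_Inl: "x \<in> Lv \<Longrightarrow> psi x = Inl z \<Longrightarrow> z = x"
  unfolding psi_def by (auto split: if_splits)

lemma psi_Inr: "x \<in> Lv \<Longrightarrow> psi x = Inr e \<Longrightarrow> e \<in> F \<and> x \<in> e \<and> inF x"
proof -
  assume x: "x \<in> Lv" and p: "psi x = Inr e"
  show ?thesis
  proof (cases "inF x")
    case False then show ?thesis using p by (simp add: psi_def)
  next
    case True
    show ?thesis
    proof (cases "x \<in> C")
      case False
      then have "e = eu x" using p True by (simp add: psi_def split: if_splits)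
      moreover have xW: "x \<in> W" using x by simp
      ultimately show ?thesis using leaf_facts(1,2)[OF xW False True] True by simp
    next
      case xC: True
      show ?thesis
      proof (cases "{v0,x} \<in> F")
        case True
        then show ?thesis using p xC \<open>inF x\<close> by (auto simp: psi_def)
      next
        case False
        then have "flip x" "e = {x, lmin x}" using p xC \<open>inF x\<close> by (simp_all add: psi_def split: if_splits)
        then show ?thesis using flip_D[OF _ xC] \<open>inF x\<close> by auto
      qed
    qed
  qed
qed

lemma psi_in: "x \<in> Lv \<Longrightarrow> psi x \<in> Es"
proof -
  assume x: "x \<in> Lv"
  show ?thesis
  proof (cases "psi x")
    case (Inl z) then show ?thesis using psi_Inl[OF x] x by simp
  next
    case (Inr e) then show ?thesis using psi_Inr[OF x] by simp
  qed
qed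

lemma psi_leaf_Inr: "x \<in> Lv \<Longrightarrow> x \<notin> C \<Longrightarrow> psi x = Inr e \<Longrightarrow>
   e = eu x \<and> \<not> (flip (cen x) \<and> x = lmin (cen x))"
  unfolding psi_def by (auto split: if_splits)

lemma psi_cen_Inr: "x \<in> Lv \<Longrightarrow> x \<in> C \<Longrightarrow> psi x = Inr e \<Longrightarrow>
   (e = {v0,x} \<and> {v0,x} \<in> F) \<or> ({v0,x} \<notin> F \<and> flip x \<and> e = {x, lmin x})"
  unfolding psi_def by (auto split: if_splits)

lemma psi_inj: "inj_on psi Lv"
proof (rule inj_onI)
  fix x y assume x: "x \<in> Lv" and y: "y \<in> Lv" and eq: "psi x = psi y"
  show "x = y"
  proof (cases "psi x")
    case (Inl z)
    then show ?thesis using psi_Inl[OF x] psi_Inl[OF y] eq by metis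
  next
    case (Inr e)
    have ex: "e \<in> F" "x \<in> e" using psi_Inr[OF x Inr] by auto
    have ey: "y \<in> e" using psi_Inr[OF y] Inr eq by auto
    have gen: "u = v" if u: "u \<in> Lv" "u \<notin> C" "v \<in> Lv" "v \<in> C" "psi u = Inr e" "psi v = Inr e" "u \<in> e" "v \<in> e" for u v
    proof -
      have lu: "e = eu u" "\<not> (flip (cen u) \<and> u = lmin (cen u))" using psi_leaf_Inr[OF u(1,2,5)] by auto
      have iu: "inF u" using psi_Inr[OF u(1,5)] by simp
      have uW: "u \<in> W" using u(1) by simp
      note lf = leaf_facts(1,2,4,5,6,7)[OF uW u(2) iu]
      have "cen u \<in> e" using lf(4) lu(1) by simp
      then have cu: "cen u = v"
        using F_C_unique[OF ex(1) _ u(8) _ u(4)] lf(3) by simp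
      from psi_cen_Inr[OF u(3,4,6)] show ?thesis
      proof
        assume "e = {v0,v} \<and> {v0,v} \<in> F"
        then have "u = v0 \<or> u = v" using u(7) by auto
        then show ?thesis using u(1) v0Lv by auto
      next
        assume "{v0,v} \<notin> F \<and> flip v \<and> e = {v, lmin v}"
        then have "u = lmin v \<or> u = v" using u(7) by auto
        then show ?thesis using lu(2) cu \<open>{v0,v} \<notin> F \<and> flip v \<and> e = {v, lmin v}\<close> by auto
      qed
    qed
    show ?thesis
    proof (cases "x \<in> C")
      case xC: True
      show ?thesis
      proof (cases "y \<in> C")
        case True then show ?thesis using F_C_unique[OF ex ey xC] by simp
      next
        case False then show ?thesis using gen[OF y False x xC] Inr eq ex ey by simp
      qed
    next
      case xC: False
      show ?thesis
      proof (cases "y \<in> C")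
        case True then show ?thesis using gen[OF x xC y True] Inr eq ex ey by simp
      next
        case False
        obtain p1 q1 where pq: "e = {p1,q1}" "p1 \<in> C" "q1 \<notin> C" using ex(1) by (elim F_edge) blast
        then show ?thesis using ex(2) ey xC False by auto
      qed
    qed
  qed
qed

definition S0 :: "('a + 'a set) set" where "S0 = psi ` Lv"

lemma S0_sub: "S0 \<subseteq> Es" unfolding S0_def using psi_in by auto

lemma card_S0: "card S0 = card W - 1"
  unfolding S0_def using card_image[OF psi_inj] finLv v0Lv by simp

lemma mg_adjI: "y \<in> S \<Longrightarrow> ends y = {p1,q1} \<Longrightarrow> p1 \<noteq> q1 \<Longrightarrow> (p1,q1) \<in> mg_adj S ends"
  unfolding mg_adj_def by auto

lemma mg_adj_sym: "(p1,q1) \<in> mg_adj S ends \<Longrightarrow> (q1,p1) \<in> mg_adj S ends"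
  unfolding mg_adj_def by (auto simp: insert_commute)

lemma mg_rt_sym: "(p1,q1) \<in> (mg_adj S ends)\<^sup>* \<Longrightarrow> (q1,p1) \<in> (mg_adj S ends)\<^sup>*"
proof -
  have "sym (mg_adj S ends)" by (meson mg_adj_sym symI)
  then show "(p1,q1) \<in> (mg_adj S ends)\<^sup>* \<Longrightarrow> (q1,p1) \<in> (mg_adj S ends)\<^sup>*"
    by (meson sym_rtrancl symD)
qed

lemma S0_Inl: "x \<in> Lv \<Longrightarrow> psi x = Inl x \<Longrightarrow> (v0,x) \<in> mg_adj S0 ends"
  by (rule mg_adjI[of "Inl x"]) (use v0Lv in \<open>auto simp: S0_def intro: image_eqI[where x=x]\<close>)

lemma reach_cen:
  assumes c: "c \<in> Lv" "c \<in> C" "inF c"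
  shows "(v0,c) \<in> (mg_adj S0 ends)\<^sup>*"
proof (cases "{v0,c} \<in> F")
  case True
  then have "psi c = Inr {v0,c}" using c by (simp add: psi_def)
  then have "(v0,c) \<in> mg_adj S0 ends"
    using Lv_ne_v0[OF c(1)]
    by (intro mg_adjI[of "Inr {v0,c}"]) (auto simp: S0_def c intro: image_eqI[where x=c])
  then show ?thesis by simp
next
  case False
  show ?thesis
  proof (cases "flip c")
    case True
    note fl = flip_D[OF True c(2)]
    let ?l = "lmin c"
    have pc: "psi c = Inr {c, ?l}" using c False True by (simp add: psi_def)
    have lc: "cen ?l = c" "inF ?l" using leaf_cen[of ?l c] fl c by auto
    have pl: "psi ?l = Inl ?l" using fl lc True by (simp add: psi_def)
    have "(v0, ?l) \<in> mg_adj S0 ends" using S0_Inl[OF fl(6) pl] .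
    moreover have "(?l, c) \<in> mg_adj S0 ends"
      by (intro mg_adjI[of "Inr {c, ?l}"]) (auto simp: S0_def pc fl c intro: image_eqI[where x=c])
    ultimately show ?thesis by (meson r_into_rtrancl rtrancl_trans)
  next
    case False
    then have "psi c = Inl c" using c \<open>{v0,c} \<notin> F\<close> by (simp add: psi_def)
    then show ?thesis using S0_Inl[OF c(1)] by blast
  qed
qed

lemma reach_all: "x \<in> Lv \<Longrightarrow> (v0,x) \<in> (mg_adj S0 ends)\<^sup>*"
proof -
  assume x: "x \<in> Lv"
  show ?thesis
  proof (cases "inF x")
    case False
    then have "psi x = Inl x" by (simp add: psi_def)
    then show ?thesis using S0_Inl[OF x] by blast
  next
    case True
    show ?thesis
    proof (cases "x \<in> C")
      case True then show ?thesis using reach_cen x \<open>inF x\<close> by blast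
    next
      case False
      have xW: "x \<in> W" using x by simp
      note lf = leaf_facts(1,2,4,5,6,7)[OF xW False True]
      show ?thesis
      proof (cases "psi x")
        case (Inl z)
        then have "psi x = Inl x" using psi_Inl[OF x] by simp
        then show ?thesis using S0_Inl[OF x] by blast
      next
        case (Inr e)
        then have e: "e = {cen x, x}" using psi_leaf_Inr[OF x False] lf x by auto
        have cx: "(cen x, x) \<in> mg_adj S0 ends"
          by (intro mg_adjI[of "Inr e"]) (use Inr e lf x in \<open>auto simp: S0_def intro: image_eqI[where x=x]\<close>)
        show ?thesis
        proof (cases "cen x = v0")
          case True then show ?thesis using cx by auto
        next
          case False
          then have "cen x \<in> Lv" using lf x F_sub_W[of "eu x" "cen x"] by auto
          moreover have "inF (cen x)" using lf x by (auto simp: inF_def)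
          ultimately have "(v0, cen x) \<in> (mg_adj S0 ends)\<^sup>*" using reach_cen lf x by blast
          then show ?thesis using cx by (meson rtrancl.rtrancl_into_rtrancl)
        qed
      qed
    qed
  qed
qed

lemma S0_span: "mg_spanning_tree W Es ends S0"
  unfolding mg_spanning_tree_def
proof (intro conjI ballI)
  show "S0 \<subseteq> Es" by (rule S0_sub)
  show "card S0 = card W - 1" by (rule card_S0)
  fix u v assume u: "u \<in> W" and v: "v \<in> W"
  have ru: "(v0,u) \<in> (mg_adj S0 ends)\<^sup>*" using u reach_all by auto
  have rv: "(v0,v) \<in> (mg_adj S0 ends)\<^sup>*" using v reach_all by auto
  show "(u,v) \<in> (mg_adj S0 ends)\<^sup>*" using mg_rt_sym[OF ru] rv by (rule rtrancl_trans)
qed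

lemma wt_Inl[simp]: "wt (Inl v) = a v" by (simp add: aux_weight_def)
lemma wt_Inr[simp]: "wt (Inr e) = p e" by (simp add: aux_weight_def)

lemma wt_nonneg: "y \<in> Es \<Longrightarrow> 0 \<le> wt y"
  by (cases y) (auto simp: anneg price_ge0)

lemma edges_at: "y \<in> Es \<Longrightarrow> x \<in> Lv \<Longrightarrow> x \<in> ends y \<Longrightarrow> y = Inl x \<or> (\<exists>e. y = Inr e \<and> e \<in> F \<and> x \<in> e)"
  by (cases y) (auto simp: Lv_ne_v0)

lemma closed_reach:
  assumes "(x,y) \<in> R\<^sup>*" "x \<in> X" "\<And>p1 q1. (p1,q1) \<in> R \<Longrightarrow> p1 \<in> X \<Longrightarrow> q1 \<in> X"
  shows "y \<in> X"
  using assms(1,2) by (induction rule: rtrancl_induct) (auto intro: assms(3))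

lemma mg_adjE:
  assumes "(p1,q1) \<in> mg_adj S ends"
  obtains y where "y \<in> S" "ends y = {p1,q1}" "p1 \<noteq> q1"
  using assms unfolding mg_adj_def by auto

definition D :: "('a + 'a set) set \<Rightarrow> 'a \<Rightarrow> ('a + 'a set) set" where
  "D S' x = (if \<not> inF x then {Inl x}
     else if x \<notin> C then (if Inl x \<in> S' then {Inl x} else {Inr (eu x)})
     else S' \<inter> insert (Inl x) {Inr e | e. e \<in> F \<and> x \<in> e \<and> (\<forall>u\<in>e. u \<noteq> x \<longrightarrow> u = v0 \<or> Inl u \<in> S')})"

context
  fixes S' assumes S'sub: "S' \<subseteq> Es" and S'con: "\<forall>u\<in>W. \<forall>v\<in>W. (u,v) \<in> (mg_adj S' ends)\<^sup>*"
begin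

lemma incident: assumes x: "x \<in> Lv" shows "\<exists>y\<in>S'. x \<in> ends y"
proof -
  have "(v0,x) \<in> (mg_adj S' ends)\<^sup>*" using S'con x by simp
  moreover have "v0 \<noteq> x" using x v0Lv by auto
  ultimately obtain z where "(z,x) \<in> mg_adj S' ends" by (metis rtranclE)
  then obtain y where "y \<in> S'" "ends y = {z,x}" by (elim mg_adjE)
  then show ?thesis by auto
qed

lemma D_fin: "finite (D S' x)"
proof -
  have "finite S'" using S'sub finEs finite_subset by blast
  then show ?thesis unfolding D_def by auto
qed

lemma D_sub_ne: assumes x: "x \<in> Lv" shows "D S' x \<subseteq> S' \<and> D S' x \<noteq> {}"
proof (cases "inF x")
  case False
  obtain y where y: "y \<in> S'" "x \<in> ends y" using incident[OF x] by blast
  have "y = Inl x" using edges_at[OF _ x y(2)] y(1) S'sub False by (auto simp: inF_def)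
  then show ?thesis using y False by (simp add: D_def)
next
  case True
  show ?thesis
  proof (cases "x \<in> C")
    case False
    have xW: "x \<in> W" using x by simp
    note lf = leaf_facts(1,2,3)[OF xW False True]
    show ?thesis
    proof (cases "Inl x \<in> S'")
      case True then show ?thesis using False \<open>inF x\<close> by (simp add: D_def)
    next
      case nI: False
      obtain y where y: "y \<in> S'" "x \<in> ends y" using incident[OF x] by blast
      have "y \<noteq> Inl x" using nI y by auto
      then obtain e where "y = Inr e" "e \<in> F" "x \<in> e" using edges_at[OF _ x y(2)] y(1) S'sub by auto
      then have "y = Inr (eu x)" using lf(3) by simp
      then show ?thesis using y nI False \<open>inF x\<close> by (simp add: D_def)
    qed
  next
    case xC: True
    have Dx: "D S' x = S' \<inter> insert (Inl x) {Inr e | e. e \<in> F \<and> x \<in> e \<and> (\<forall>u\<in>e. u \<noteq> x \<longrightarrow> u = v0 \<or> Inl u \<in> S')}"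
      using True xC by (simp add: D_def)
    have "D S' x \<noteq> {}"
    proof
      assume D0: "D S' x = {}"
      have nIx: "Inl x \<notin> S'" using D0 Dx by auto
      have nIr: "\<not> (Inr e \<in> S' \<and> e \<in> F \<and> x \<in> e \<and> (\<forall>u\<in>e. u \<noteq> x \<longrightarrow> u = v0 \<or> Inl u \<in> S'))" for e
        using D0 Dx by blast
      define X where "X = insert x {u. {x,u} \<in> F \<and> Inr {x,u} \<in> S'}"
      have cl: "q1 \<in> X" if pq: "(p1,q1) \<in> mg_adj S' ends" "p1 \<in> X" for p1 q1
      proof -
        obtain y where y: "y \<in> S'" "ends y = {p1,q1}" "p1 \<noteq> q1" using pq(1) by (elim mg_adjE)
        have yE: "y \<in> Es" using y(1) S'sub by auto
        show ?thesis
        proof (cases "p1 = x")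
          case True
          then have "y = Inl x \<or> (\<exists>e. y = Inr e \<and> e \<in> F \<and> x \<in> e)" using edges_at[OF yE x] y(2) by auto
          then obtain e where e: "y = Inr e" "e \<in> F" "x \<in> e" using nIx y(1) by auto
          obtain u where u: "e = {x,u}" "u \<notin> C" "u \<noteq> x" using F_other[OF e(2,3) xC] by blast
          have "q1 = u" using y(2,3) e(1) u(1) True by (auto simp: doubleton_eq_iff)
          then show ?thesis using u e y(1) by (simp add: X_def)
        next
          case False
          then have pu: "{x,p1} \<in> F" "Inr {x,p1} \<in> S'" using pq(2) by (auto simp: X_def)
          have "p1 \<noteq> v0 \<and> Inl p1 \<notin> S'" using nIr[of "{x,p1}"] pu False by auto
          then have pL: "p1 \<in> Lv" "Inl p1 \<notin> S'" using F_sub_W[OF pu(1), of p1] by auto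
          have pnC: "p1 \<notin> C" using K_props[OF xC, of p1] pu(1) by (simp add: K_def)
          have "y = Inl p1 \<or> (\<exists>e. y = Inr e \<and> e \<in> F \<and> p1 \<in> e)" using edges_at[OF yE pL(1)] y(2) by auto
          then obtain e where e: "y = Inr e" "e \<in> F" "p1 \<in> e" using pL y(1) by auto
          have "e = {x,p1}" using deg1[of p1 e "{x,p1}"] pL pnC e pu by auto
          then have "q1 = x" using y(2,3) e(1) by (auto simp: doubleton_eq_iff)
          then show ?thesis by (simp add: X_def)
        qed
      qed
      have "(x,v0) \<in> (mg_adj S' ends)\<^sup>*" using S'con x by simp
      then have "v0 \<in> X" using closed_reach[of x v0 _ X] cl by (auto simp: X_def)
      then have "{x,v0} \<in> F" "Inr {x,v0} \<in> S'" using x v0Lv by (auto simp: X_def)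
      then show False using nIr[of "{x,v0}"] by auto
    qed
    then show ?thesis using Dx by auto
  qed
qed

lemma D_disj: assumes "x \<in> Lv" "y \<in> Lv" "x \<noteq> y" shows "D S' x \<inter> D S' y = {}"
proof (rule ccontr)
  assume "D S' x \<inter> D S' y \<noteq> {}"
  then obtain z where z: "z \<in> D S' x" "z \<in> D S' y" by blast
  have Inl_own: "z = Inl v \<Longrightarrow> v = w" if "z \<in> D S' w" for v w
    using that unfolding D_def by (auto split: if_splits)
  show False
  proof (cases z)
    case (Inl v)
    then show ?thesis using Inl_own[OF z(1)] Inl_own[OF z(2)] assms(3) by simp
  next
    case (Inr e)
    have info: "w \<in> e \<and> e \<in> F \<and> inF w \<and> (w \<notin> C \<longrightarrow> e = eu w \<and> Inl w \<notin> S') \<and>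
      (w \<in> C \<longrightarrow> (\<forall>u\<in>e. u \<noteq> w \<longrightarrow> u = v0 \<or> Inl u \<in> S'))"
      if "Inr e \<in> D S' w" "w \<in> Lv" for w
    proof -
      have wW: "w \<in> W" using that(2) by simp
      show ?thesis using that leaf_facts(1,2)[OF wW] unfolding D_def by (auto split: if_splits)
    qed
    have ix: "x \<in> e" "e \<in> F" "inF x" "x \<notin> C \<longrightarrow> e = eu x \<and> Inl x \<notin> S'"
        "x \<in> C \<longrightarrow> (\<forall>u\<in>e. u \<noteq> x \<longrightarrow> u = v0 \<or> Inl u \<in> S')"
      using info[of x] z(1) Inr assms(1) by auto
    have iy: "y \<in> e" "inF y" "y \<notin> C \<longrightarrow> e = eu y \<and> Inl y \<notin> S'"
        "y \<in> C \<longrightarrow> (\<forall>u\<in>e. u \<noteq> y \<longrightarrow> u = v0 \<or> Inl u \<in> S')"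
      using info[of y] z(2) Inr assms(2) by auto
    show ?thesis
    proof (cases "x \<in> C")
      case True
      show ?thesis
      proof (cases "y \<in> C")
        case True then show ?thesis using F_C_unique[OF ix(2,1) iy(1) \<open>x \<in> C\<close>] assms(3) by simp
      next
        case False
        then show ?thesis using ix(5) True iy(1,3) assms v0Lv by auto
      qed
    next
      case False
      show ?thesis
      proof (cases "y \<in> C")
        case True then show ?thesis using iy(4) False ix(1,4) assms v0Lv by auto
      next
        case yC: False
        obtain p1 q1 where "e = {p1,q1}" "p1 \<in> C" "q1 \<notin> C" using ix(2) by (elim F_edge) blast
        then show ?thesis using ix(1) iy(1) False yC assms(3) by auto
      qed
    qed
  qed
qed

lemma D_bound: assumes x: "x \<in> Lv" and y: "y \<in> D S' x" shows "wt (psi x) \<le> wt y"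
proof (cases "inF x")
  case False
  then show ?thesis using y by (simp add: D_def psi_def)
next
  case iF: True
  have xW: "x \<in> W" using x by simp
  have xv: "x \<noteq> v0" using x v0Lv by auto
  show ?thesis
  proof (cases "x \<in> C")
    case False
    note lf = leaf_facts(1,2,4,5,6,7)[OF xW False iF]
    define c where "c = cen x"
    have e: "eu x = {c,x}" "{c,x} \<in> F" "c \<in> C" "x \<in> K c" "c \<noteq> x" using lf unfolding c_def by auto
    have cW: "c \<in> W" using F_sub_W[OF e(2)] by simp
    have yb: "a x \<le> wt y"
    proof -
      have "y = Inl x \<or> y = Inr (eu x)" using y False iF by (auto simp: D_def split: if_splits)
      then show ?thesis using price_ge_leaf[OF lf(1) lf(2) x False] by auto
    qed
    have "wt (psi x) \<le> a x"
    proof (cases "flip c \<and> x = lmin c")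
      case True
      then have "psi x = Inl x" using False iF by (simp add: psi_def c_def)
      then show ?thesis by simp
    next
      case nfl: False
      then have px: "psi x = Inr {c,x}" using False iF e(1) by (simp add: psi_def c_def)
      have ax: "0 \<le> a x" using anneg x by simp
      show ?thesis
      proof (cases "c = v0")
        case True
        then have "p {v0,x} \<le> a x" using price_le[OF cyc2[OF x] _ ax] e by auto
        then show ?thesis using px True by simp
      next
        case cv: False
        then have cL: "c \<in> Lv" using cW by simp
        show ?thesis
        proof (cases "{v0,c} \<in> F")
          case True
          have "p {c,x} \<le> a x" using price_le[OF cyc3b[OF cL x e(5) True e(2)] _ ax] by auto
          then show ?thesis using px by simp
        next
          case nv: False
          have v0K: "v0 \<notin> K c" using nv by (simp add: K_def insert_commute)
          show ?thesis
          proof (cases "flip c")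
            case False
            have Kne: "K c \<noteq> {}" using e(4) by auto
            have "\<not> a (lmin c) < a c" using False cv Kne v0K by (simp add: flip_def)
            moreover have "a (lmin c) \<le> a x" using lmin(2)[OF e(3) Kne] e(4) by auto
            ultimately have acx: "a c \<le> a x" by simp
            have "p {c,x} \<le> a x" using price_le[OF cyc3[OF cL x e(5) e(2)] _ ax] acx by auto
            then show ?thesis using px by simp
          next
            case True
            note fl = flip_D[OF True e(3)]
            let ?l = "lmin c"
            have lx: "?l \<noteq> x" using nfl True by simp
            have alx: "a ?l \<le> a x" using fl(9) e(4) by auto
            have "{x,c} \<in> F" using e(2) by (simp add: insert_commute)
            then have "p {x,c} \<le> a x"
              using price_le[OF cyc4[OF x cL fl(6) e(5)[symmetric] fl(8)[symmetric] lx[symmetric] _ fl(5)] _ ax] alx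
              by auto
            then show ?thesis using px by (simp add: insert_commute)
          qed
        qed
      qed
    qed
    then show ?thesis using yb by simp
  next
    case xC: True
    have Dx: "y \<in> S'" "y = Inl x \<or> (\<exists>e. y = Inr e \<and> e \<in> F \<and> x \<in> e \<and> (\<forall>u\<in>e. u \<noteq> x \<longrightarrow> u = v0 \<or> Inl u \<in> S'))"
      using y iF xC by (auto simp: D_def)
    have ax: "0 \<le> a x" using anneg x by simp
    have Kne: "K x \<noteq> {}" using cen_K_ne[OF xC iF] .
    have shape: "\<exists>u. e = {x,u} \<and> u \<notin> C \<and> u \<noteq> x \<and> u \<in> W \<and> u \<in> K x" if ef: "e \<in> F" "x \<in> e" for e
    proof -
      obtain u where u: "e = {x,u}" "u \<notin> C" "u \<noteq> x" "u \<in> W" using F_other[OF ef xC] by blast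
      then show ?thesis using ef(1) by (auto simp: K_def)
    qed
    show ?thesis
    proof (cases "{v0,x} \<in> F")
      case True
      then have px: "psi x = Inr {v0,x}" using xC iF by (simp add: psi_def)
      from Dx(2) show ?thesis
      proof
        assume "y = Inl x"
        then show ?thesis using px price_le[OF cyc2[OF x True] _ ax] by auto
      next
        assume "\<exists>e. y = Inr e \<and> e \<in> F \<and> x \<in> e \<and> (\<forall>u\<in>e. u \<noteq> x \<longrightarrow> u = v0 \<or> Inl u \<in> S')"
        then obtain e where ye: "y = Inr e" "e \<in> F" "x \<in> e" by blast
        obtain u where u: "e = {x,u}" "u \<notin> C" "u \<noteq> x" "u \<in> W" "u \<in> K x" using shape[OF ye(2,3)] by blast
        show ?thesis
        proof (cases "u = v0")
          case True
          then show ?thesis using px ye u by (simp add: insert_commute)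
        next
          case False
          then have uL: "u \<in> Lv" using u by simp
          have au: "0 \<le> a u" using anneg uL by simp
          have "{x,u} \<in> F" using ye u by simp
          then have "p {v0,x} \<le> a u" using price_le[OF cyc3b[OF x uL u(3)[symmetric] True] _ au] by auto
          also have "a u \<le> p e" using price_ge_leaf[OF ye(2) _ uL u(2)] u by simp
          finally show ?thesis using px ye by simp
        qed
      qed
    next
      case nv: False
      show ?thesis
      proof (cases "flip x")
        case True
        note fl = flip_D[OF True xC]
        let ?l = "lmin x"
        have px: "psi x = Inr {x, ?l}" using xC iF nv True by (simp add: psi_def)
        from Dx(2) show ?thesis
        proof
          assume "y = Inl x"
          then show ?thesis using px price_le[OF cyc3[OF x fl(6) fl(8)[symmetric] fl(5)] _ ax] fl(2) by auto
        next
          assume "\<exists>e. y = Inr e \<and> e \<in> F \<and> x \<in> e \<and> (\<forall>u\<in>e. u \<noteq> x \<longrightarrow> u = v0 \<or> Inl u \<in> S')"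
          then obtain e where ye: "y = Inr e" "e \<in> F" "x \<in> e" by blast
          obtain u where u: "e = {x,u}" "u \<notin> C" "u \<noteq> x" "u \<in> W" "u \<in> K x" using shape[OF ye(2,3)] by blast
          have uv: "u \<noteq> v0" using u nv ye by (auto simp: insert_commute)
          then have uL: "u \<in> Lv" using u by simp
          have au: "0 \<le> a u" using anneg uL by simp
          show ?thesis
          proof (cases "u = ?l")
            case True then show ?thesis using px ye u by simp
          next
            case False
            have "{?l,x} \<in> F" using fl(5) by (simp add: insert_commute)
            moreover have "{x,u} \<in> F" using ye u by simp
            ultimately have "p {?l,x} \<le> a u"
              using price_le[OF cyc4[OF fl(6) x uL fl(8) u(3)[symmetric] False[symmetric]] _ au] fl(9) u(5)
              by auto
            also have "a u \<le> p e" using price_ge_leaf[OF ye(2) _ uL u(2)] u by simp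
            finally show ?thesis using px ye by (simp add: insert_commute)
          qed
        qed
      next
        case nf: False
        have px: "psi x = Inl x" using xC iF nv nf by (simp add: psi_def)
        have v0K: "v0 \<notin> K x" using nv by (simp add: K_def insert_commute)
        have "\<not> a (lmin x) < a x" using nf xv Kne v0K by (simp add: flip_def)
        then have lx: "a x \<le> a (lmin x)" by simp
        from Dx(2) show ?thesis
        proof
          assume "y = Inl x" then show ?thesis using px by simp
        next
          assume "\<exists>e. y = Inr e \<and> e \<in> F \<and> x \<in> e \<and> (\<forall>u\<in>e. u \<noteq> x \<longrightarrow> u = v0 \<or> Inl u \<in> S')"
          then obtain e where ye: "y = Inr e" "e \<in> F" "x \<in> e" by blast
          obtain u where u: "e = {x,u}" "u \<notin> C" "u \<noteq> x" "u \<in> W" "u \<in> K x" using shape[OF ye(2,3)] by blast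
          have uv: "u \<noteq> v0" using u nv ye by (auto simp: insert_commute)
          then have uL: "u \<in> Lv" using u by simp
          have "a (lmin x) \<le> a u" using lmin(2)[OF xC Kne] u(5) by auto
          also have "a u \<le> p e" using price_ge_leaf[OF ye(2) _ uL u(2)] u by simp
          finally show ?thesis using px ye lx by simp
        qed
      qed
    qed
  qed
qed

lemma S0_le: "sum wt S0 \<le> sum wt S'"
proof -
  have finS': "finite S'" using S'sub finEs finite_subset by blast
  have sub: "\<Union>(D S' ` Lv) \<subseteq> S'" using D_sub_ne by auto
  have "sum wt S0 = (\<Sum>x\<in>Lv. wt (psi x))" unfolding S0_def using sum.reindex[OF psi_inj] by simp
  also have "\<dots> \<le> (\<Sum>x\<in>Lv. sum wt (D S' x))"
  proof (rule sum_mono)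
    fix x assume x: "x \<in> Lv"
    obtain y where y: "y \<in> D S' x" using D_sub_ne[OF x] by blast
    have "wt (psi x) \<le> wt y" using D_bound[OF x y] .
    also have "wt y \<le> sum wt (D S' x)"
      using D_fin y D_sub_ne[OF x] S'sub wt_nonneg by (intro member_le_sum) auto
    finally show "wt (psi x) \<le> sum wt (D S' x)" .
  qed
  also have "\<dots> = sum wt (\<Union>(D S' ` Lv))"
    using D_disj finLv D_fin by (intro sum.UNION_disjoint[symmetric]) auto
  also have "\<dots> \<le> sum wt S'"
    using sub finS' S'sub wt_nonneg by (intro sum_mono2) auto
  finally show ?thesis .
qed

end


lemma S0_mst: "is_mst W Es ends wt S0"
  unfolding is_mst_def
proof (intro conjI allI impI)
  show "mg_spanning_tree W Es ends S0" by (rule S0_span)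
  fix S' assume "mg_spanning_tree W Es ends S'"
  then have "S' \<subseteq> Es" "\<forall>u\<in>W. \<forall>v\<in>W. (u,v) \<in> (mg_adj S' ends)\<^sup>*"
    unfolding mg_spanning_tree_def by auto
  then show "sum wt S0 \<le> sum wt S'" by (rule S0_le)
qed

lemma leaf_in_S0:
  assumes u: "u \<in> Lv" "u \<notin> C" "inF u"
  shows "Inr (eu u) \<in> S0"
proof (cases "flip (cen u) \<and> u = lmin (cen u)")
  case False
  then have "psi u = Inr (eu u)" using u by (simp add: psi_def)
  then show ?thesis unfolding S0_def using u(1) by (metis image_eqI)
next
  case True
  have uW: "u \<in> W" using u(1) by simp
  note lf = leaf_facts(1,2,4,5,6,7)[OF uW u(2,3)]
  let ?c = "cen u"
  note fl = flip_D[OF conjunct1[OF True] lf(3)]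
  have cW: "?c \<in> W" using F_sub_W[OF lf(1), of ?c] lf(4) by simp
  have cL: "?c \<in> Lv" using cW fl(4) by simp
  have icf: "inF ?c" using lf(1,4) by (auto simp: inF_def)
  have nv: "{v0, ?c} \<notin> F" using fl(3) by (simp add: K_def insert_commute)
  have "psi ?c = Inr {?c, lmin ?c}" using lf(3) icf nv True by (simp add: psi_def)
  also have "{?c, lmin ?c} = eu u" using True lf(4) by simp
  finally show ?thesis unfolding S0_def using cL by (metis image_eqI)
qed

theorem core_rev:
  assumes a0: "a v0 = 0"
  shows "(\<Sum>v\<in>{v\<in>W - C. \<exists>e\<in>F. v\<in>e}. a v) \<le> revenue v0 Lv a F"
proof -
  define L where "L = {v\<in>W - C. \<exists>e\<in>F. v\<in>e}"
  define rv where "rv S = (\<Sum>e \<in> {e \<in> F. Inr e \<in> S}. p e)" for S :: "('a + 'a set) set"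
  define RS where "RS = {rv S | S. is_mst W Es ends wt S}"
  have rev: "revenue v0 Lv a F = Max RS" unfolding revenue_def RS_def rv_def by simp
  have "RS \<subseteq> rv ` Pow Es" unfolding RS_def is_mst_def mg_spanning_tree_def by blast
  then have finRS: "finite RS" using finEs by (meson finite_Pow_iff finite_imageI finite_subset)
  have inRS: "rv S0 \<in> RS" unfolding RS_def using S0_mst by blast
  have finL: "finite L" unfolding L_def using finW by simp
  have L'props: "u \<in> Lv \<and> u \<notin> C \<and> inF u" if "u \<in> L - {v0}" for u
    using that by (auto simp: L_def inF_def)
  have "(\<Sum>v\<in>L. a v) = (\<Sum>v\<in>L - {v0}. a v)"
    using finL a0 by (intro sum.mono_neutral_right) auto
  also have "\<dots> \<le> (\<Sum>v\<in>L - {v0}. p (eu v))"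
  proof (rule sum_mono)
    fix v assume v: "v \<in> L - {v0}"
    note vp = L'props[OF v]
    have vW: "v \<in> W" using vp by simp
    note lf = leaf_facts(1,2)[OF vW conjunct1[OF conjunct2[OF vp]] conjunct2[OF conjunct2[OF vp]]]
    show "a v \<le> p (eu v)" using price_ge_leaf[OF lf(1,2)] vp by blast
  qed
  also have "\<dots> = (\<Sum>e\<in>eu ` (L - {v0}). p e)"
  proof -
    have "inj_on eu (L - {v0})"
    proof (rule inj_onI)
      fix x y assume x: "x \<in> L - {v0}" and y: "y \<in> L - {v0}" and eq: "eu x = eu y"
      note xp = L'props[OF x] and yp = L'props[OF y]
      have xW: "x \<in> W" "y \<in> W" using xp yp by auto
      have lx: "eu x \<in> F" "x \<in> eu x" using leaf_facts(1,2)[OF xW(1)] xp by auto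
      have ly: "y \<in> eu y" using leaf_facts(2)[OF xW(2)] yp by auto
      obtain p1 q1 where "eu x = {p1,q1}" "p1 \<in> C" "q1 \<notin> C" using lx(1) by (elim F_edge) blast
      then show "x = y" using lx(2) ly eq xp yp by auto
    qed
    then show ?thesis by (simp add: sum.reindex)
  qed
  also have "\<dots> \<le> rv S0"
    unfolding rv_def
  proof (rule sum_mono2)
    show "finite {e \<in> F. Inr e \<in> S0}" using finF by simp
    show "eu ` (L - {v0}) \<subseteq> {e \<in> F. Inr e \<in> S0}"
    proof
      fix e assume "e \<in> eu ` (L - {v0})"
      then obtain u where u: "u \<in> L - {v0}" "e = eu u" by blast
      note up = L'props[OF u(1)]
      have uW: "u \<in> W" using up by simp
      have "eu u \<in> F" using leaf_facts(1)[OF uW] up by auto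
      moreover have "Inr (eu u) \<in> S0" using leaf_in_S0 up by blast
      ultimately show "e \<in> {e \<in> F. Inr e \<in> S0}" using u by simp
    qed
    show "\<And>b. b \<in> {e \<in> F. Inr e \<in> S0} - eu ` (L - {v0}) \<Longrightarrow> 0 \<le> p b" using price_ge0 by auto
  qed
  also have "\<dots> \<le> Max RS" using finRS inRS by simp
  finally show ?thesis unfolding L_def rev .
qed

end


theorem lemma8:
  fixes V :: "'a set" and E :: "'a set set" and c :: "'a set \<Rightarrow> real"
    and v0 :: 'a and i :: nat and F :: "'a set set" and L :: "'a set"
  assumes tree: "is_tree V E"
    and cost_nonneg: "\<forall>e\<in>E. 0 \<le> c e"
    and center: "is_center V E v0"
    and i_lo: "1 \<le> i" and i_hi: "i \<le> ecc V E v0"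
    and F_sub: "F \<subseteq> Bset V E v0 i"
    and stars: "forest_of_stars (insert v0 (level V E v0 i)) F"
    and leaves: "leaf_choice (insert v0 (level V E v0 i)) F L"
  shows "revenue v0 (level V E v0 i) (aux_cost V E c v0 i) F
           \<ge> (\<Sum>v\<in>L. aux_cost V E c v0 i v)"
proof -
  let ?Lv = "level V E v0 i"
  let ?a = "aux_cost V E c v0 i"
  have v0V: "v0 \<in> V" using center by (simp add: is_center_def)
  have finV: "finite V" using tree by (simp add: is_tree_def)
  have finLv: "finite ?Lv" unfolding level_def using finV by simp
  have v0Lv: "v0 \<notin> ?Lv" using i_lo tdist_v0[of E v0] by (auto simp: level_def)
  have anneg: "\<forall>v\<in>?Lv. 0 \<le> ?a v" using aux_cost_nonneg[OF tree v0V cost_nonneg i_lo] by blast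
  have Fsub: "F \<subseteq> {{u,v}|u v. u \<in> insert v0 ?Lv \<and> v \<in> insert v0 ?Lv \<and> u \<noteq> v}"
  proof
    fix e assume "e \<in> F"
    then have "e \<in> Bset V E v0 i" using F_sub by blast
    then obtain x y where "e = {x,y}" "x \<in> insert v0 ?Lv" "y \<in> insert v0 ?Lv" "x \<noteq> y"
      unfolding Bset_def by blast
    then show "e \<in> {{u,v}|u v. u \<in> insert v0 ?Lv \<and> v \<in> insert v0 ?Lv \<and> u \<noteq> v}" by blast
  qed
  obtain C where C: "C \<subseteq> insert v0 ?Lv" "\<forall>e\<in>F. card (e \<inter> C) = 1"
    "\<forall>v \<in> insert v0 ?Lv - C. card {e\<in>F. v\<in>e} \<le> 1" "L = {v \<in> insert v0 ?Lv - C. \<exists>e\<in>F. v\<in>e}"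
    using leaves unfolding leaf_choice_def by blast
  interpret core v0 ?Lv ?a F C
    using finLv v0Lv anneg Fsub C(1-3) by unfold_locales
  have a0: "?a v0 = 0" by (simp add: aux_cost_def)
  show ?thesis using core_rev[OF a0] C(4) by simp
qed

end
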